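(* Let $\mathbf{x}=(x_n)$ be a summable nonincreasing sequence of positive reals such that $\mathcal{A}(\mathbf{x})$ is neither a Cantor set nor a finite set, and suppose $x_k=x_{k+1}$ for some $k\in\mathbb{N}$. Then there is $x\in\mathcal{A}(\mathbf{x})$ with $f_{\mathbf{x}}(x)\ge 4$ (where the infinite values $\omega,\mathfrak{c}$ count as $\ge 4$).
   Context: For a summable sequence $\mathbf{x}=(x_n)$ of positive reals, the achievement set is $\mathcal{A}(\mathbf{x})=\{\sum_{n\in A}x_n : A\subseteq\mathbb{N}\}$, and the cardinal function $f_{\mathbf{x}}:\mathcal{A}(\mathbf{x})\to\{1,2,3,\dots\}\cup\{\omega,\mathfrak{c}\}$ sends $x$ to the cardinality of the set of $(\varepsilon_n)\in\{0,1\}^{\mathbb{N}}$ with $\sum\varepsilon_n x_n=x$. *)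

theory Defs
  imports "HOL-Analysis.Analysis"
begin

definition subsum :: "(nat \<Rightarrow> real) \<Rightarrow> nat set \<Rightarrow> real" where
  "subsum x A = (\<Sum>n. if n \<in> A then x n else 0)"

definition achievement_set :: "(nat \<Rightarrow> real) \<Rightarrow> real set" where
  "achievement_set x = {subsum x A | A. True}"

definition representations :: "(nat \<Rightarrow> real) \<Rightarrow> real \<Rightarrow> (nat \<Rightarrow> bool) set" where
  "representations x t = {\<epsilon>. (\<Sum>n. (if \<epsilon> n then 1 else 0) * x n) = t}"

definition cantor_set :: "real set \<Rightarrow> bool" where
  "cantor_set C \<longleftrightarrow> C \<noteq> {} \<and> compact C \<and> (\<forall>y\<in>C. y islimpt C)
     \<and> interior (closure C) = {}"

end

theory Submission imports Defs begin

definition phi :: "(nat \<Rightarrow> real) \<Rightarrow> (nat \<Rightarrow> bool) \<Rightarrow> real" where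
  "phi x e = (\<Sum>n. (if e n then 1 else 0) * x n)"

lemma compact_UNIV_fun: "compact (UNIV :: (nat \<Rightarrow> bool) set)"
proof -
  have "compact_space (product_topology (\<lambda>i. euclidean::bool topology) UNIV)"
    by (rule iffD2[OF compact_space_product_topology]) (simp add: compact_space_def finite_imp_compact)
  then have "compact_space (euclidean :: (nat \<Rightarrow> bool) topology)"
    by (simp only: euclidean_product_topology)
  then show ?thesis
    by (simp add: compact_space_def)
qed

lemma summable_phi:
  fixes x :: "nat \<Rightarrow> real"
  assumes "\<And>n. x n \<ge> 0" "summable x"
  shows "summable (\<lambda>n. (if e n then 1 else 0) * x n)"
  by (rule summable_comparison_test'[where g=x]) (use assms in auto)

lemma continuous_phi:
  assumes "\<And>n. x n \<ge> 0" "summable x"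
  shows "continuous_on UNIV (phi x)"
proof -
  have ul: "uniform_limit UNIV (\<lambda>n e. \<Sum>i<n. (if e i then 1 else 0) * x i)
      (\<lambda>e. \<Sum>i. (if e i then 1 else 0) * x i) sequentially"
    by (rule Weierstrass_m_test[where M=x]) (use assms in auto)
  have c: "continuous_on UNIV (\<lambda>e::nat\<Rightarrow>bool. (if e i then 1 else 0) * x i)" for i
  proof -
    have "continuous_on UNIV (\<lambda>b::bool. (if b then 1 else 0) * x i)"
      by (simp add: continuous_on_discrete)
    moreover have "continuous_on UNIV (\<lambda>e::nat\<Rightarrow>bool. e i)"
      by (rule continuous_on_product_coordinates)
    ultimately show ?thesis
      using continuous_on_compose2[of UNIV "\<lambda>b::bool. (if b then 1 else 0) * x i" UNIV "\<lambda>e::nat\<Rightarrow>bool. e i"]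
      by simp
  qed
  show ?thesis unfolding phi_def
    by (rule uniform_limit_theorem[OF _ ul]) (auto intro!: always_eventually continuous_on_sum c)
qed


lemma ach_eq: "achievement_set x = range (phi x)"
proof -
  have h1: "subsum x A = phi x (\<lambda>n. n \<in> A)" for A
    unfolding subsum_def phi_def by (rule arg_cong[where f=suminf]) auto
  have h2: "phi x e = subsum x {n. e n}" for e
    unfolding subsum_def phi_def by (rule arg_cong[where f=suminf]) auto
  show ?thesis unfolding achievement_set_def
  proof (rule set_eqI, rule iffI)
    fix t assume "t \<in> {subsum x A |A. True}"
    then obtain A where tA: "t = subsum x A" by auto
    show "t \<in> range (phi x)" using h1[of A] tA by (metis rangeI)
  next
    fix t assume "t \<in> range (phi x)"
    then obtain e where "t = phi x e" by auto
    then show "t \<in> {subsum x A |A. True}" using h2 by auto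
  qed
qed

lemma compact_range_phi:
  assumes "\<And>n. x n \<ge> 0" "summable x"
  shows "compact (range (phi x))"
  by (rule compact_continuous_image[OF continuous_phi[OF assms] compact_UNIV_fun])

lemma phi_flip:
  fixes x :: "nat \<Rightarrow> real"
  assumes "\<And>n. x n \<ge> 0" "summable x"
  shows "phi x (e(n := \<not> e n)) = phi x e + (if e n then - x n else x n)"
proof -
  let ?f = "\<lambda>i. (if e i then 1 else 0) * x i"
  let ?g = "\<lambda>i. (if (e(n := \<not> e n)) i then 1 else 0) * x i"
  have d: "(\<lambda>i. ?g i - ?f i) = (\<lambda>i. if i = n then (if e n then - x n else x n) else 0)"
    by (auto simp: fun_eq_iff)
  have "suminf ?g - suminf ?f = suminf (\<lambda>i. ?g i - ?f i)"
    by (rule suminf_diff) (auto intro: summable_phi assms)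
  also have "\<dots> = (if e n then - x n else x n)"
    unfolding d using sums_single[of n "\<lambda>_. (if e n then - x n else x n)"] sums_unique by fastforce
  finally show ?thesis unfolding phi_def by simp
qed

lemma perfect_phi:
  fixes x :: "nat \<Rightarrow> real"
  assumes "\<And>n. x n > 0" "summable x" "t \<in> range (phi x)"
  shows "t islimpt range (phi x)"
proof -
  obtain e where t: "t = phi x e" using assms(3) by auto
  have lim: "x \<longlonglongrightarrow> 0" using summable_LIMSEQ_zero[OF assms(2)] .
  show ?thesis unfolding islimpt_approachable_real
  proof (intro allI impI)
    fix r :: real assume "r > 0"
    then obtain n where n: "x n < r"
      using order_tendstoD(2)[OF lim \<open>r > 0\<close>] unfolding eventually_sequentially by auto
    have nn: "\<And>n. x n \<ge> 0" using assms(1) less_imp_le by blast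
    have eq: "phi x (e(n := \<not> e n)) = t + (if e n then - x n else x n)"
      using phi_flip[OF nn assms(2)] t by simp
    have mem: "phi x (e(n := \<not> e n)) \<in> range (phi x)" by (rule rangeI)
    show "\<exists>x'\<in>range (phi x). x' \<noteq> t \<and> \<bar>x' - t\<bar> < r"
      by (rule bexI[OF _ mem]) (use eq n assms(1)[of n] in auto)
  qed
qed

lemma interval_split:
  fixes a b :: real
  assumes "a < b" "{a..b} \<subseteq> C1 \<union> C2" "closed C2"
  shows "\<exists>a' b'. a' < b' \<and> ({a'..b'} \<subseteq> C1 \<or> {a'..b'} \<subseteq> C2)"
proof (cases "{a..b} \<subseteq> C2")
  case True then show ?thesis using assms(1) by blast
next
  case False
  then obtain p where p: "p \<in> {a..b}" "p \<notin> C2" by blast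
  have "open (- C2)" using assms(3) by auto
  then obtain r where r: "r > 0" "ball p r \<subseteq> - C2" using p open_contains_ball by blast
  let ?a = "max a (p - r/2)" and ?b = "min b (p + r/2)"
  have "?a < ?b" using p r assms(1) by auto
  moreover have "{?a..?b} \<subseteq> C1"
  proof
    fix y assume y: "y \<in> {?a..?b}"
    then have "y \<in> ball p r" using r by (auto simp: dist_real_def)
    then have "y \<notin> C2" using r by auto
    moreover have "y \<in> {a..b}" using y by auto
    ultimately show "y \<in> C1" using assms(2) by auto
  qed
  ultimately show ?thesis by blast
qed


lemma phi_cong_z:
  assumes "z k = 0"
  shows "phi z (e(k := b)) = phi z e"
  unfolding phi_def using assms by (intro arg_cong[where f=suminf]) (auto simp: fun_eq_iff)

lemma phi_decomp:
  fixes x :: "nat \<Rightarrow> real"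
  assumes nn: "\<And>n. x n \<ge> 0" and sx: "summable x"
    and z: "z = (\<lambda>n. if n = k \<or> n = Suc k then 0 else x n)"
  shows "phi x e = phi z e + (if e k then x k else 0) + (if e (Suc k) then x (Suc k) else 0)"
proof -
  have nz: "\<And>n. z n \<ge> 0" using nn z by auto
  have sz: "summable z" by (rule summable_comparison_test'[where g=x]) (use nn z sx in auto)
  let ?f = "\<lambda>i. (if e i then 1 else 0) * x i"
  let ?g = "\<lambda>i. (if e i then 1 else 0) * z i"
  have "suminf ?f - suminf ?g = suminf (\<lambda>i. ?f i - ?g i)"
    by (rule suminf_diff) (auto intro: summable_phi nn nz sx sz)
  also have "\<dots> = (\<Sum>i\<in>{k, Suc k}. ?f i - ?g i)"
    by (rule suminf_finite) (auto simp: z)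
  also have "\<dots> = (if e k then x k else 0) + (if e (Suc k) then x (Suc k) else 0)"
    by (simp add: z)
  finally show ?thesis unfolding phi_def by simp
qed

lemma key:
  fixes z :: "nat \<Rightarrow> real"
  assumes nn: "\<And>n. z n \<ge> 0" and sz: "summable z" and zk: "z k = 0" "z (Suc k) = 0"
    and ab: "a < b" "{a..b} \<subseteq> range (phi z)"
  shows "\<exists>e1 e2. e1 \<noteq> e2 \<and> \<not> e1 k \<and> \<not> e1 (Suc k) \<and> \<not> e2 k \<and> \<not> e2 (Suc k)
           \<and> phi z e1 = phi z e2"
proof (rule ccontr)
  assume H0: "\<not> ?thesis"
  have H: "e1 = e2" if "\<not> e1 k" "\<not> e1 (Suc k)" "\<not> e2 k" "\<not> e2 (Suc k)" "phi z e1 = phi z e2"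
    for e1 e2 using H0 that by blast
  have tl: "(\<lambda>N. \<Sum>i. z (i + N)) \<longlonglongrightarrow> 0"
  proof -
    have "(\<lambda>N. suminf z - (\<Sum>i<N. z i)) \<longlonglongrightarrow> suminf z - suminf z"
      by (intro tendsto_intros summable_LIMSEQ sz)
    then show ?thesis using suminf_minus_initial_segment[OF sz] by simp
  qed
  obtain N where N: "N > Suc k" "(\<Sum>i. z (i + N)) < b - a"
  proof -
    have "eventually (\<lambda>N. (\<Sum>i. z (i+N)) < b - a) sequentially"
      using order_tendstoD(2)[OF tl] ab by simp
    then obtain N0 where "\<forall>N\<ge>N0. (\<Sum>i. z (i+N)) < b - a"
      unfolding eventually_sequentially by auto
    then show ?thesis using that[of "max N0 (Suc (Suc k))"] by auto
  qed
  define r where "r = (\<Sum>i. z (i + N))"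
  define m where "m F e n = (if n < N then n \<in> F else e n)"
    for F :: "nat set" and e :: "nat \<Rightarrow> bool" and n
  define P where "P = Pow ({..<N} - {k, Suc k})"
  define C where "C F = range (\<lambda>e. phi z (m F e))" for F
  have finP: "finite P" unfolding P_def by simp
  have contm: "continuous_on UNIV (m F)" for F
  proof (rule continuous_on_coordinatewise_then_product)
    fix n
    show "continuous_on UNIV (\<lambda>e. m F e n)"
    proof (cases "n < N")
      case True then show ?thesis by (simp add: m_def)
    next
      case False then show ?thesis by (simp add: m_def continuous_on_product_coordinates)
    qed
  qed
  have closedC: "closed (C F)" for F
  proof -
    have "continuous_on UNIV (\<lambda>e. phi z (m F e))"
      by (rule continuous_on_compose2[OF continuous_phi[OF nn sz] contm]) auto
    then show ?thesis unfolding C_def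
      by (intro compact_imp_closed compact_continuous_image compact_UNIV_fun)
  qed
  define S where "S F = (\<Sum>i<N. (if i \<in> F then 1 else 0) * z i)" for F
  have split: "\<exists>T. 0 \<le> T \<and> T \<le> r \<and> phi z (m F e) = T + S F" for F e
  proof -
    let ?t = "\<lambda>i. (if m F e i then 1 else 0) * z i"
    have st: "summable ?t" by (rule summable_phi[OF nn sz])
    have "phi z (m F e) = (\<Sum>i. ?t (i + N)) + (\<Sum>i<N. ?t i)"
      unfolding phi_def by (rule suminf_split_initial_segment[OF st])
    moreover have "(\<Sum>i<N. ?t i) = S F" unfolding S_def m_def by (rule sum.cong) auto
    moreover have "0 \<le> (\<Sum>i. ?t (i + N))"
      by (rule suminf_nonneg) (use summable_ignore_initial_segment[OF st] nn in auto)
    moreover have "(\<Sum>i. ?t (i + N)) \<le> r" unfolding r_def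
      by (rule suminf_le) (use summable_ignore_initial_segment[OF st] summable_ignore_initial_segment[OF sz] nn in auto)
    ultimately show ?thesis by auto
  qed
  have diam: "v - u \<le> r" if uv: "u \<in> C F" "v \<in> C F" for F u v
  proof -
    obtain e1 where "u = phi z (m F e1)" using uv(1) unfolding C_def by auto
    moreover obtain e2 where "v = phi z (m F e2)" using uv(2) unfolding C_def by auto
    ultimately show ?thesis using split[of F e1] split[of F e2] by auto
  qed
  have cover: "{a..b} \<subseteq> (\<Union>F\<in>P. C F)"
  proof
    fix t assume "t \<in> {a..b}"
    then obtain e where te: "t = phi z e" using ab by auto
    define e' where "e' = e(k := False, Suc k := False)"
    have "phi z e' = phi z e" unfolding e'_def using phi_cong_z[of z, OF zk(1)] phi_cong_z[of z, OF zk(2)]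
      by simp
    define F where "F = {n. n < N \<and> e' n}"
    have FP: "F \<in> P" unfolding F_def P_def e'_def by auto
    have "m F e' = e'" unfolding m_def F_def by (auto simp: fun_eq_iff)
    then have "t \<in> C F" unfolding C_def using te \<open>phi z e' = phi z e\<close> by (metis rangeI)
    then show "t \<in> (\<Union>F\<in>P. C F)" using FP by auto
  qed
  have disj: "C F \<inter> C G = {}" if "F \<in> P" "G \<in> P" "F \<noteq> G" for F G
  proof (rule ccontr)
    assume "C F \<inter> C G \<noteq> {}"
    then obtain e1 e2 where eq: "phi z (m F e1) = phi z (m G e2)" unfolding C_def by auto
    have "m F e1 = m G e2"
      by (rule H[OF _ _ _ _ eq]) (use that N in \<open>auto simp: m_def P_def\<close>)
    note mm = this
    have "F = G"
    proof (rule set_eqI)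
      fix n
      show "n \<in> F \<longleftrightarrow> n \<in> G"
      proof (cases "n < N")
        case True
        then show ?thesis using fun_cong[OF mm, of n] unfolding m_def by simp
      next
        case False
        then show ?thesis using that(1,2) unfolding P_def by auto
      qed
    qed
    then show False using that(3) by simp
  qed
  have "a \<in> {a..b}" using ab(1) by simp
  then obtain F0 where F0: "F0 \<in> P" "a \<in> C F0" using cover by blast
  define E2 where "E2 = (\<Union>F\<in>P - {F0}. C F)"
  have cE2: "closed E2" unfolding E2_def using finP closedC by (intro closed_Union) auto
  have "C F0 \<inter> E2 = {}" unfolding E2_def using disj F0(1) by auto
  moreover have "{a..b} \<subseteq> C F0 \<union> E2" using cover unfolding E2_def by auto
  moreover have "C F0 \<inter> {a..b} \<noteq> {}" using F0 ab by auto
  ultimately have "E2 \<inter> {a..b} = {}"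
    using connected_Icc[of a b] closedC[of F0] cE2 unfolding connected_closed by blast
  moreover have "b \<in> {a..b}" using ab(1) by simp
  ultimately have "b \<in> C F0" using \<open>{a..b} \<subseteq> C F0 \<union> E2\<close> by blast
  then have "b - a \<le> r" using diam F0 by blast
  then show False using N r_def by simp
qed


theorem proposition2p2:
  fixes x :: "nat \<Rightarrow> real"
  assumes pos: "\<And>n. x n > 0"
    and summ: "summable x"
    and noninc: "\<And>n. x (Suc n) \<le> x n"
    and not_cantor: "\<not> cantor_set (achievement_set x)"
    and not_finite: "\<not> finite (achievement_set x)"
    and eq: "\<exists>k. x k = x (Suc k)"
  shows "\<exists>t \<in> achievement_set x.
           infinite (representations x t) \<or> card (representations x t) \<ge> 4"
proof -
  obtain k where xk: "x k = x (Suc k)" using eq by blast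
  define d where "d = x k"
  define z where "z = (\<lambda>n. if n = k \<or> n = Suc k then 0 else x n)"
  have nn: "\<And>n. x n \<ge> 0" using pos less_imp_le by blast
  have nz: "\<And>n. z n \<ge> 0" using nn z_def by auto
  have sz: "summable z" by (rule summable_comparison_test'[where g=x]) (use nn z_def summ in auto)
  have zk: "z k = 0" "z (Suc k) = 0" by (auto simp: z_def)
  have dec: "phi x e = phi z e + (if e k then d else 0) + (if e (Suc k) then d else 0)" for e
    using phi_decomp[OF nn summ z_def, of e] xk d_def by simp
  let ?A = "range (phi x)"
  let ?B = "range (phi z)"
  have AA: "achievement_set x = ?A" by (rule ach_eq)
  have compA: "compact ?A" by (rule compact_range_phi[OF nn summ])
  have "interior (closure ?A) \<noteq> {}"
    using not_cantor compA perfect_phi[OF pos summ] unfolding cantor_set_def AA by auto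
  then have "interior ?A \<noteq> {}" using compact_imp_closed[OF compA] closure_closed by simp
  then obtain t where "t \<in> interior ?A" by auto
  then obtain r where r: "r > 0" "ball t r \<subseteq> ?A" using mem_interior by blast
  have I: "{t - r/2 .. t + r/2} \<subseteq> ?A"
  proof
    fix y assume "y \<in> {t - r/2 .. t + r/2}"
    then have "y \<in> ball t r" using r(1) by (auto simp: dist_real_def)
    then show "y \<in> ?A" using r(2) by auto
  qed
  define B1 where "B1 = (+) d ` ?B"
  define B2 where "B2 = (+) (2*d) ` ?B"
  have cB: "closed ?B" by (rule compact_imp_closed[OF compact_range_phi[OF nz sz]])
  have cB1: "closed B1" unfolding B1_def by (rule closed_translation[OF cB])
  have cB2: "closed B2" unfolding B2_def by (rule closed_translation[OF cB])
  have AB: "?A \<subseteq> (?B \<union> B1) \<union> B2"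
  proof
    fix y assume "y \<in> ?A"
    then obtain e where y: "y = phi x e" by auto
    have m: "phi z e \<in> ?B" by simp
    show "y \<in> (?B \<union> B1) \<union> B2"
    proof (cases "e k"; cases "e (Suc k)")
      assume "e k" "e (Suc k)"
      then have "y = 2*d + phi z e" using y dec[of e] by simp
      then show ?thesis unfolding B2_def using m by blast
    next
      assume "e k" "\<not> e (Suc k)"
      then have "y = d + phi z e" using y dec[of e] by simp
      then show ?thesis unfolding B1_def using m by blast
    next
      assume "\<not> e k" "e (Suc k)"
      then have "y = d + phi z e" using y dec[of e] by simp
      then show ?thesis unfolding B1_def using m by blast
    next
      assume "\<not> e k" "\<not> e (Suc k)"
      then have "y = phi z e" using y dec[of e] by simp
      then show ?thesis using m by blast
    qed
  qed
  obtain a b c where abc: "a < b" "{a..b} \<subseteq> (+) c ` ?B"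
  proof -
    have "t - r/2 < t + r/2" using r by simp
    from interval_split[OF this subset_trans[OF I AB] cB2]
    obtain a1 b1 where a1: "a1 < b1" "{a1..b1} \<subseteq> ?B \<union> B1 \<or> {a1..b1} \<subseteq> B2" by blast
    show ?thesis
    proof (cases "{a1..b1} \<subseteq> B2")
      case True then show ?thesis using that[of a1 b1 "2*d"] a1 unfolding B2_def by blast
    next
      case False
      then have "{a1..b1} \<subseteq> ?B \<union> B1" using a1 by blast
      from interval_split[OF a1(1) this cB1]
      obtain a2 b2 where a2: "a2 < b2" "{a2..b2} \<subseteq> ?B \<or> {a2..b2} \<subseteq> B1" by blast
      show ?thesis
      proof (cases "{a2..b2} \<subseteq> B1")
        case True then show ?thesis using that[of a2 b2 d] a2 unfolding B1_def by blast
      next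
        case False
        then have "{a2..b2} \<subseteq> (+) 0 ` ?B" using a2 by simp
        then show ?thesis using that[of a2 b2 0] a2 by blast
      qed
    qed
  qed
  have "{a - c .. b - c} \<subseteq> ?B"
  proof
    fix y assume "y \<in> {a - c .. b - c}"
    then have "c + y \<in> {a..b}" by auto
    then have "c + y \<in> (+) c ` ?B" using abc by blast
    then show "y \<in> ?B" by auto
  qed
  from key[OF nz sz zk _ this] abc(1)
  obtain e1 e2 where ee: "e1 \<noteq> e2" "\<not> e1 k" "\<not> e1 (Suc k)" "\<not> e2 k" "\<not> e2 (Suc k)"
     "phi z e1 = phi z e2" by auto
  define T where "T = phi z e1 + d"
  define f1 where "f1 = e1(k := True)"
  define f2 where "f2 = e1(Suc k := True)"
  define f3 where "f3 = e2(k := True)"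
  define f4 where "f4 = e2(Suc k := True)"
  have z1: "phi z f1 = phi z e1" unfolding f1_def by (rule phi_cong_z[of z k, OF zk(1)])
  have z2: "phi z f2 = phi z e1" unfolding f2_def by (rule phi_cong_z[of z "Suc k", OF zk(2)])
  have z3: "phi z f3 = phi z e1" unfolding f3_def using ee(6) by (simp only: phi_cong_z[of z k, OF zk(1)])
  have z4: "phi z f4 = phi z e1" unfolding f4_def using ee(6) by (simp only: phi_cong_z[of z "Suc k", OF zk(2)])
  have ph1: "phi x f1 = T" using dec[of f1] z1 ee(3) unfolding T_def by (simp add: f1_def)
  have ph2: "phi x f2 = T" using dec[of f2] z2 ee(2) unfolding T_def by (simp add: f2_def)
  have ph3: "phi x f3 = T" using dec[of f3] z3 ee(5) unfolding T_def by (simp add: f3_def)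
  have ph4: "phi x f4 = T" using dec[of f4] z4 ee(4) unfolding T_def by (simp add: f4_def)
  note ph = ph1 ph2 ph3 ph4
  obtain n where n: "e1 n \<noteq> e2 n" using ee(1) by auto
  have nk: "n \<noteq> k" "n \<noteq> Suc k" using n ee by auto
  have dist: "f1 \<noteq> f2" "f1 \<noteq> f3" "f1 \<noteq> f4" "f2 \<noteq> f3" "f2 \<noteq> f4" "f3 \<noteq> f4"
    unfolding f1_def f2_def f3_def f4_def using n nk ee
    by (auto simp: fun_eq_iff)
  have R: "representations x T = {e. phi x e = T}"
    unfolding representations_def phi_def by simp
  have sub: "{f1, f2, f3, f4} \<subseteq> representations x T" unfolding R using ph by blast
  have c4: "card {f1, f2, f3, f4} = 4" using dist by simp
  have "T \<in> achievement_set x" using ph(1) AA by (metis rangeI)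
  moreover have "infinite (representations x T) \<or> card (representations x T) \<ge> 4"
    using card_mono[OF _ sub] c4 by force
  ultimately show ?thesis by blast
qed

end
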